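(* Let $G=K(n_1,\dots,n_s)$ be a complete $s$-partite graph ($s\ge 2$) with parts $V_1,\dots,V_s$, $|V_j|=n_j$. If $j\in\{1,\dots,s\}$ satisfies $n_j\ge 6$, then $\chi_3(G)=\chi_3(G-V_j)+1$.
   Context: A map $f:V(G)\to\{1,\dots,k\}$ is a $3$-relaxed $k$-coloring if every vertex $u$ has at most $3$ neighbors $v$ with $f(v)=f(u)$; $\chi_3(G)$ is the minimum $k$ for which such a coloring exists. $G-V_j$ is the graph obtained by deleting the vertices of $V_j$. *)

theory Defs
  imports Main
begin

definition relaxed_coloring ::
  "nat \<Rightarrow> 'a set \<Rightarrow> ('a \<Rightarrow> 'a \<Rightarrow> bool) \<Rightarrow> nat \<Rightarrow> ('a \<Rightarrow> nat) \<Rightarrow> bool" where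
  "relaxed_coloring d V E k f \<longleftrightarrow>
     (\<forall>u\<in>V. f u \<in> {1..k}) \<and>
     (\<forall>u\<in>V. card {v\<in>V. E u v \<and> f v = f u} \<le> d)"

definition relaxed_chi :: "nat \<Rightarrow> 'a set \<Rightarrow> ('a \<Rightarrow> 'a \<Rightarrow> bool) \<Rightarrow> nat" where
  "relaxed_chi d V E = (LEAST k. \<exists>f. relaxed_coloring d V E k f)"

text \<open>Complete s-partite graph K(n_0,...,n_{s-1}): part i is V_i = {(i,k). k < n i},
vertices in different parts are adjacent, vertices in the same part are not.
(Parts are indexed 0..s-1.)\<close>
definition cmp_vertices :: "nat \<Rightarrow> (nat \<Rightarrow> nat) \<Rightarrow> (nat \<times> nat) set" where
  "cmp_vertices s n = {(i, k). i < s \<and> k < n i}"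

definition cmp_part :: "(nat \<Rightarrow> nat) \<Rightarrow> nat \<Rightarrow> (nat \<times> nat) set" where
  "cmp_part n j = {(j, k) | k. k < n j}"

definition cmp_adj :: "nat \<times> nat \<Rightarrow> nat \<times> nat \<Rightarrow> bool" where
  "cmp_adj u v \<longleftrightarrow> fst u \<noteq> fst v"

end

theory Submission
  imports Defs
begin

lemma fin_V: "finite (cmp_vertices s n)"
proof -
  have "cmp_vertices s n \<subseteq> {..<s} \<times> {..<Max (n ` {..<s})+1}"
  proof
    fix x assume "x \<in> cmp_vertices s n"
    then obtain i k where x: "x = (i,k)" "i < s" "k < n i" unfolding cmp_vertices_def by auto
    have "n i \<le> Max (n ` {..<s})" using x by (intro Max_ge) auto
    then have "k < Max (n ` {..<s})+1" using x by linarith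
    then show "x \<in> {..<s} \<times> {..<Max (n ` {..<s})+1}" using x by simp
  qed
  then show ?thesis by (rule finite_subset) auto
qed

lemma exists_col:
  assumes "W \<subseteq> cmp_vertices s n"
  shows "relaxed_coloring 3 W cmp_adj s (\<lambda>v. fst v + 1)"
proof -
  have "\<forall>u\<in>W. {v\<in>W. cmp_adj u v \<and> fst v + 1 = fst u + 1} = {}"
    by (auto simp: cmp_adj_def)
  have "\<forall>u\<in>W. card {v\<in>W. cmp_adj u v \<and> fst v + 1 = fst u + 1} \<le> 3"
  proof
    fix u assume "u \<in> W"
    then have e: "{v\<in>W. cmp_adj u v \<and> fst v + 1 = fst u + 1} = {}" by (auto simp: cmp_adj_def)
    show "card {v\<in>W. cmp_adj u v \<and> fst v + 1 = fst u + 1} \<le> 3" unfolding e by simp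
  qed
  moreover have "\<forall>u\<in>W. fst u + 1 \<in> {1..s}" using assms by (auto simp: cmp_vertices_def)
  ultimately show ?thesis unfolding relaxed_coloring_def by blast
qed

lemma compress:
  assumes "finite C" "card C \<le> m" "\<forall>u\<in>W. h u \<in> C"
    and "\<forall>u\<in>W. card {v\<in>W. cmp_adj u v \<and> h v = h u} \<le> 3"
  shows "\<exists>g. relaxed_coloring 3 W cmp_adj m g"
proof -
  obtain \<phi> where phi: "bij_betw \<phi> C {0..<card C}" using ex_bij_betw_finite_nat[OF assms(1)] by blast
  have inj: "inj_on \<phi> C" using phi bij_betw_def by blast
  have rng: "\<And>c. c \<in> C \<Longrightarrow> \<phi> c < card C" using phi bij_betwE by fastforce
  let ?g = "\<lambda>v. \<phi> (h v) + 1"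
  have "\<forall>u\<in>W. {v\<in>W. cmp_adj u v \<and> ?g v = ?g u} = {v\<in>W. cmp_adj u v \<and> h v = h u}"
    using assms(3) inj by (auto dest: inj_onD)
  moreover have "\<forall>u\<in>W. ?g u \<in> {1..m}" using assms(2,3) rng by fastforce
  ultimately have "relaxed_coloring 3 W cmp_adj m ?g" using assms(4) unfolding relaxed_coloring_def by simp
  then show ?thesis by blast
qed

lemma distribute:
  assumes "finite U" "finite C" "card U \<le> 4 * card C"
  shows "\<exists>\<phi>. (\<forall>u\<in>U. \<phi> u \<in> C) \<and> (\<forall>c. card {u\<in>U. \<phi> u = c} \<le> 4)"
proof -
  have "card (C \<times> {0..<4::nat}) = card C * 4" by (simp add: card_cartesian_product)
  then obtain g where g: "g ` U \<subseteq> C \<times> {0..<4::nat}" "inj_on g U"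
    using card_le_inj[of U "C \<times> {0..<4::nat}"] assms by auto
  have "card {u\<in>U. fst (g u) = c} \<le> 4" for c
  proof -
    have "card {u\<in>U. fst (g u) = c} \<le> card ({c} \<times> {0..<4::nat})"
      by (rule card_inj_on_le[where f=g]) (use g in \<open>auto intro: inj_on_subset\<close>)
    then show ?thesis by simp
  qed
  moreover have "\<forall>u\<in>U. fst (g u) \<in> C" using g by auto
  ultimately show ?thesis by (intro exI[of _ "\<lambda>u. fst (g u)"]) auto
qed


lemma lower:
  assumes f: "relaxed_coloring 3 (cmp_vertices s n) cmp_adj k f"
    and j: "j < s" and nj: "n j \<ge> 6"
  shows "\<exists>(C::nat set) h. finite C \<and> card C \<le> k - 1
     \<and> (\<forall>u\<in>cmp_vertices s n - cmp_part n j. h u \<in> C)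
     \<and> (\<forall>u\<in>cmp_vertices s n - cmp_part n j.
          card {v\<in>cmp_vertices s n - cmp_part n j. cmp_adj u v \<and> h v = h u} \<le> 3)"
proof -
  define V where "V = cmp_vertices s n"
  define P where "P = cmp_part n j"
  define V' where "V' = V - P"
  have finV: "finite V" unfolding V_def by (rule fin_V)
  have PV: "P \<subseteq> V" using j unfolding P_def V_def cmp_part_def cmp_vertices_def by auto
  have inP: "\<And>v. v \<in> V \<Longrightarrow> v \<in> P \<longleftrightarrow> fst v = j"
    unfolding P_def V_def cmp_part_def cmp_vertices_def by auto
  have cardP: "card P = n j"
  proof -
    have "P = (\<lambda>k. (j,k)) ` {..<n j}" unfolding P_def cmp_part_def by auto
    moreover have "inj_on (\<lambda>k. (j,k)) {..<n j}" by (auto simp: inj_on_def)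
    ultimately show ?thesis by (simp add: card_image)
  qed
  have frng: "\<And>u. u \<in> V \<Longrightarrow> f u \<in> {1..k}" using f unfolding relaxed_coloring_def V_def by blast
  have fdeg: "\<And>u. u \<in> V \<Longrightarrow> card {v\<in>V. cmp_adj u v \<and> f v = f u} \<le> 3"
    using f unfolding relaxed_coloring_def V_def by blast
  define A where "A c = {v\<in>V'. f v = c}" for c
  define Pc where "Pc c = {v\<in>P. f v = c}" for c
  define M where "M = f ` P"
  define single where "single c \<longleftrightarrow> (\<forall>x\<in>A c. \<forall>y\<in>A c. fst x = fst y)" for c
  have finA: "finite (A c)" for c unfolding A_def V'_def using finV by auto
  have finPP: "finite P" using finV PV finite_subset by auto
  have finP: "finite (Pc c)" for c unfolding Pc_def using finPP by auto
  have finM: "finite M" unfolding M_def using finPP by auto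
  have MK: "M \<subseteq> {1..k}" unfolding M_def using frng PV by auto
  have F1: "card (A c) \<le> 3" if cM: "c \<in> M" for c
  proof -
    obtain w where w: "w \<in> P" "f w = c" using cM unfolding M_def by auto
    have wj: "fst w = j" using inP[of w] w PV by blast
    have "{v\<in>V. cmp_adj w v \<and> f v = f w} = A c"
      unfolding A_def V'_def cmp_adj_def using w wj inP by auto
    then show ?thesis using fdeg[of w] w PV by auto
  qed
  have F2: "card (Pc c) + card {v\<in>A c. fst v \<noteq> fst u} \<le> 3" if "u \<in> A c" for c u
  proof -
    have u0: "u \<in> V" "u \<notin> P" "f u = c" using that unfolding A_def V'_def by auto
    have u: "u \<in> V" "fst u \<noteq> j" "f u = c" using u0 inP[of u] by auto
    have "Pc c \<union> {v\<in>A c. fst v \<noteq> fst u} \<subseteq> {v\<in>V. cmp_adj u v \<and> f v = f u}"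
    proof
      fix v assume v: "v \<in> Pc c \<union> {v\<in>A c. fst v \<noteq> fst u}"
      show "v \<in> {v\<in>V. cmp_adj u v \<and> f v = f u}"
      proof (cases "v \<in> Pc c")
        case True
        then have "v \<in> P" "f v = c" unfolding Pc_def by auto
        moreover then have "fst v = j" using inP[of v] PV by blast
        ultimately show ?thesis using u PV unfolding cmp_adj_def by auto
      next
        case False
        then have "v \<in> A c" "fst v \<noteq> fst u" using v by auto
        then show ?thesis using u unfolding cmp_adj_def A_def V'_def by auto
      qed
    qed
    then have "card (Pc c \<union> {v\<in>A c. fst v \<noteq> fst u}) \<le> card {v\<in>V. cmp_adj u v \<and> f v = f u}"
      by (rule card_mono[rotated]) (use finV in auto)
    then have "card (Pc c \<union> {v\<in>A c. fst v \<noteq> fst u}) \<le> 3"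
      using fdeg[OF u(1)] by linarith
    moreover have "Pc c \<inter> {v\<in>A c. fst v \<noteq> fst u} = {}"
      unfolding Pc_def A_def V'_def by auto
    ultimately show ?thesis using finP finA by (simp add: card_Un_disjoint)
  qed
  have F3: "card (A c) + card (Pc c) \<le> 4" if cM: "c \<in> M" and ns: "\<not> single c" for c
  proof -
    obtain u u' where uu: "u \<in> A c" "u' \<in> A c" "fst u \<noteq> fst u'" using ns unfolding single_def by auto
    have "A c \<subseteq> {v\<in>A c. fst v \<noteq> fst u} \<union> {v\<in>A c. fst v \<noteq> fst u'}" using uu by auto
    then have "card (A c) \<le> card {v\<in>A c. fst v \<noteq> fst u} + card {v\<in>A c. fst v \<noteq> fst u'}"
      by (metis (no_types, lifting) card_Un_le card_mono finA finite_Un le_trans finite_subset mem_Collect_eq subsetI)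
    then show ?thesis using F2[OF uu(1)] F2[OF uu(2)] F1[OF cM] by linarith
  qed
  have F4: "card (A c) + card (Pc c) \<le> 6" if "c \<in> M" "A c \<noteq> {}" for c
    using F1[OF that(1)] F2[of _ c] that(2) by fastforce
  have subdeg: "card {v\<in>V'. cmp_adj u v \<and> f v = f u} \<le> 3" if "u \<in> V'" for u
  proof -
    have "card {v\<in>V'. cmp_adj u v \<and> f v = f u} \<le> card {v\<in>V. cmp_adj u v \<and> f v = f u}"
      by (rule card_mono) (use finV in \<open>auto simp: V'_def\<close>)
    then show ?thesis using fdeg[of u] that unfolding V'_def by auto
  qed
  have fV': "f u \<in> {1..k}" if "u \<in> V'" for u using frng that unfolding V'_def by auto
  have goal: "\<exists>(C::nat set) h. finite C \<and> card C \<le> k - 1 \<and> (\<forall>u\<in>V'. h u \<in> C)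
     \<and> (\<forall>u\<in>V'. card {v\<in>V'. cmp_adj u v \<and> h v = h u} \<le> 3)"
  proof (cases "\<exists>c\<in>M. A c = {}")
    case True
    then obtain c where c: "c \<in> M" "A c = {}" by auto
    have "c \<in> {1..k}" using c MK by auto
    then have "card ({1..k} - {c}) \<le> k - 1" by simp
    moreover have "\<forall>u\<in>V'. f u \<in> {1..k} - {c}"
    proof
      fix u assume u: "u \<in> V'"
      then have "f u \<noteq> c" using c(2) unfolding A_def by blast
      with fV'[OF u] show "f u \<in> {1..k} - {c}" by simp
    qed
    ultimately have X: "finite ({1..k} - {c}) \<and> card ({1..k} - {c}) \<le> k - 1 \<and> (\<forall>u\<in>V'. f u \<in> {1..k} - {c})
     \<and> (\<forall>u\<in>V'. card {v\<in>V'. cmp_adj u v \<and> f v = f u} \<le> 3)" using subdeg by (intro conjI) auto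
    show ?thesis using X by blast
  next
    case False
    then have AM: "\<And>c. c \<in> M \<Longrightarrow> A c \<noteq> {}" by auto
    show ?thesis
    proof (cases "\<exists>a b. a \<in> M \<and> b \<in> M \<and> a \<noteq> b \<and> single a \<and> single b")
      case True
      then obtain a b where ab: "a \<in> M" "b \<in> M" "a \<noteq> b" "single a" "single b" by auto
      define h where "h v = (if f v = b then a else f v)" for v
      have "b \<in> {1..k}" using ab MK by auto
      then have "card ({1..k} - {b}) \<le> k - 1" by simp
      moreover have "\<forall>u\<in>V'. h u \<in> {1..k} - {b}"
        using ab MK fV' unfolding h_def by auto
      moreover have "card {v\<in>V'. cmp_adj u v \<and> h v = h u} \<le> 3" if u: "u \<in> V'" for u
      proof (cases "f u = a \<or> f u = b")
        case True
        then obtain x y where xy: "(x = a \<and> y = b) \<or> (x = b \<and> y = a)" "f u = x" "single x" "y \<in> M"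
          using ab by blast
        have "{v\<in>V'. cmp_adj u v \<and> h v = h u} \<subseteq> A y"
        proof
          fix v assume v: "v \<in> {v\<in>V'. cmp_adj u v \<and> h v = h u}"
          then have "f v = a \<or> f v = b" using True unfolding h_def by (auto split: if_splits)
          then have "f v = x \<or> f v = y" using xy(1) by blast
          moreover have "f v \<noteq> x"
          proof
            assume "f v = x"
            then have "v \<in> A x" "u \<in> A x" using v u xy unfolding A_def by auto
            then have "fst v = fst u" using xy(3) unfolding single_def by blast
            then show False using v unfolding cmp_adj_def by auto
          qed
          ultimately show "v \<in> A y" using v unfolding A_def by auto
        qed
        then have "card {v\<in>V'. cmp_adj u v \<and> h v = h u} \<le> card (A y)"
          using finA by (rule card_mono[rotated])
        then show ?thesis using F1[OF xy(4)] by linarith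
      next
        case False
        have "{v\<in>V'. cmp_adj u v \<and> h v = h u} \<subseteq> {v\<in>V'. cmp_adj u v \<and> f v = f u}"
          using False ab(3) unfolding h_def by (auto split: if_splits)
        then have "card {v\<in>V'. cmp_adj u v \<and> h v = h u} \<le> card {v\<in>V'. cmp_adj u v \<and> f v = f u}"
          by (rule card_mono[rotated]) (use finV in \<open>auto simp: V'_def\<close>)
        then show ?thesis using subdeg[OF u] by linarith
      qed
      ultimately have X: "finite ({1..k} - {b}) \<and> card ({1..k} - {b}) \<le> k - 1 \<and> (\<forall>u\<in>V'. h u \<in> {1..k} - {b})
     \<and> (\<forall>u\<in>V'. card {v\<in>V'. cmp_adj u v \<and> h v = h u} \<le> 3)" by (intro conjI) auto
    show ?thesis using X by blast
    next
      case False
      have Mne: "M \<noteq> {}" using cardP nj unfolding M_def by auto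
      define c0 where "c0 = (if \<exists>c\<in>M. single c then SOME c. c \<in> M \<and> single c else SOME c. c \<in> M)"
      have c0P: "c0 \<in> M \<and> ((\<exists>c\<in>M. single c) \<longrightarrow> single c0)"
      proof (cases "\<exists>c\<in>M. single c")
        case True
        then have e: "\<exists>c. c \<in> M \<and> single c" by blast
        have "c0 = (SOME c. c \<in> M \<and> single c)" using True by (simp add: c0_def)
        then have "c0 \<in> M \<and> single c0" using someI_ex[OF e] by simp
        then show ?thesis by blast
      next
        case False
        then have e: "\<exists>c. c \<in> M" using Mne by blast
        have "c0 = (SOME c. c \<in> M)" using False by (simp add: c0_def)
        then have "c0 \<in> M" using someI_ex[OF e] by simp
        then show ?thesis using False by blast
      qed
      have c0M: "c0 \<in> M" using c0P by blast
      have ns: "\<not> single c" if cc: "c \<in> M - {c0}" for c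
      proof
        assume sc: "single c"
        then have "single c0" using c0P cc by blast
        then show False using False cc sc c0M by blast
      qed
      define U where "U = {v\<in>V'. f v \<in> M}"
      have Pe: "P = (\<Union>c\<in>M. Pc c)" unfolding M_def Pc_def by blast
      have "card (\<Union>c\<in>M. Pc c) = (\<Sum>c\<in>M. card (Pc c))"
        by (rule card_UN_disjoint) (use finM finP in \<open>auto simp: Pc_def\<close>)
      then have sP: "card P = (\<Sum>c\<in>M. card (Pc c))" using Pe by simp
      have Ue: "U = (\<Union>c\<in>M. A c)" unfolding U_def A_def by blast
      have "card (\<Union>c\<in>M. A c) = (\<Sum>c\<in>M. card (A c))"
        by (rule card_UN_disjoint) (use finM finA in \<open>auto simp: A_def\<close>)
      then have sU: "card U = (\<Sum>c\<in>M. card (A c))" using Ue by simp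
      have "(\<Sum>c\<in>M. card (A c) + card (Pc c))
          = (card (A c0) + card (Pc c0)) + (\<Sum>c\<in>M - {c0}. card (A c) + card (Pc c))"
        using finM c0M by (simp add: sum.remove)
      also have "\<dots> \<le> 6 + (\<Sum>c\<in>M - {c0}. 4)"
        using F4[OF c0M AM[OF c0M]] F3 ns by (intro add_mono sum_mono) auto
      finally have "card U + card P \<le> 6 + 4 * card (M - {c0})"
        using sU sP by (simp add: sum.distrib)
      then have cU: "card U \<le> 4 * card (M - {c0})" using cardP nj by linarith
      have finU: "finite U" unfolding U_def V'_def using finV by auto
      obtain \<phi> where phi: "\<forall>u\<in>U. \<phi> u \<in> M - {c0}" "\<forall>c. card {u\<in>U. \<phi> u = c} \<le> 4"
        using distribute[OF finU _ cU] finM by auto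
      define h where "h v = (if f v \<in> M then \<phi> v else f v)" for v
      have "c0 \<in> {1..k}" using c0M MK by auto
      then have "card ({1..k} - {c0}) \<le> k - 1" by simp
      moreover have "\<forall>u\<in>V'. h u \<in> {1..k} - {c0}"
      proof
        fix u assume u: "u \<in> V'"
        show "h u \<in> {1..k} - {c0}"
        proof (cases "f u \<in> M")
          case True
          then have "u \<in> U" using u unfolding U_def by blast
          then have "\<phi> u \<in> M - {c0}" using phi(1) by blast
          then show ?thesis using True MK unfolding h_def by auto
        next
          case False
          then show ?thesis using fV'[OF u] c0M unfolding h_def by auto
        qed
      qed
      moreover have "card {v\<in>V'. cmp_adj u v \<and> h v = h u} \<le> 3" if u: "u \<in> V'" for u
      proof (cases "f u \<in> M")
        case True
        have uU: "u \<in> U" using u True unfolding U_def by auto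
        have "{v\<in>V'. cmp_adj u v \<and> h v = h u} \<subseteq> {w\<in>U. \<phi> w = \<phi> u} - {u}"
        proof
          fix v assume v: "v \<in> {v\<in>V'. cmp_adj u v \<and> h v = h u}"
          have "h u \<in> M" using True phi(1) uU unfolding h_def by auto
          then have "f v \<in> M" using v unfolding h_def by (auto split: if_splits)
          then show "v \<in> {w\<in>U. \<phi> w = \<phi> u} - {u}" using v True unfolding h_def U_def cmp_adj_def by auto
        qed
        then have "card {v\<in>V'. cmp_adj u v \<and> h v = h u} \<le> card ({w\<in>U. \<phi> w = \<phi> u} - {u})"
          by (rule card_mono[rotated]) (use finU in auto)
        also have "\<dots> = card {w\<in>U. \<phi> w = \<phi> u} - 1" using uU by (simp add: card_Diff_singleton)
        finally show ?thesis using phi(2)[rule_format, of "\<phi> u"] by linarith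
      next
        case False
        have "{v\<in>V'. cmp_adj u v \<and> h v = h u} \<subseteq> {v\<in>V'. cmp_adj u v \<and> f v = f u}"
        proof
          fix v assume v: "v \<in> {v\<in>V'. cmp_adj u v \<and> h v = h u}"
          have hu: "h u = f u" using False unfolding h_def by simp
          have "f v \<notin> M"
          proof
            assume fm: "f v \<in> M"
            then have "v \<in> U" using v unfolding U_def by blast
            then have "\<phi> v \<in> M" using phi(1) by blast
            then show False using v fm hu False unfolding h_def by simp
          qed
          then show "v \<in> {v\<in>V'. cmp_adj u v \<and> f v = f u}" using v hu unfolding h_def by simp
        qed
        then have "card {v\<in>V'. cmp_adj u v \<and> h v = h u} \<le> card {v\<in>V'. cmp_adj u v \<and> f v = f u}"
          by (rule card_mono[rotated]) (use finV in \<open>auto simp: V'_def\<close>)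
        then show ?thesis using subdeg[OF u] by linarith
      qed
      ultimately have X: "finite ({1..k} - {c0}) \<and> card ({1..k} - {c0}) \<le> k - 1 \<and> (\<forall>u\<in>V'. h u \<in> {1..k} - {c0})
     \<and> (\<forall>u\<in>V'. card {v\<in>V'. cmp_adj u v \<and> h v = h u} \<le> 3)" by (intro conjI) auto
    show ?thesis using X by blast
    qed
  qed
  then show ?thesis unfolding V'_def V_def P_def .
qed


theorem corollary5p2:
  fixes s :: nat and n :: "nat \<Rightarrow> nat" and j :: nat
  assumes "s \<ge> 2"
    and "\<forall>i<s. n i \<ge> 1"
    and "j < s"
    and "n j \<ge> 6"
  shows "relaxed_chi 3 (cmp_vertices s n) cmp_adj
         = relaxed_chi 3 (cmp_vertices s n - cmp_part n j) cmp_adj + 1"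
proof -
  define V where "V = cmp_vertices s n"
  define P where "P = cmp_part n j"
  define V' where "V' = V - P"
  define K where "K = relaxed_chi 3 V cmp_adj"
  define K' where "K' = relaxed_chi 3 V' cmp_adj"
  have finV: "finite V" unfolding V_def by (rule fin_V)
  have inP: "\<forall>v\<in>V. v \<in> P \<longleftrightarrow> fst v = j"
    unfolding P_def V_def cmp_part_def cmp_vertices_def by auto
  have exV: "\<exists>f. relaxed_coloring 3 V cmp_adj s f" using exists_col[of V s n] unfolding V_def by blast
  have exV': "\<exists>f. relaxed_coloring 3 V' cmp_adj s f" using exists_col[of V' s n] unfolding V_def V'_def by blast
  obtain g where g: "relaxed_coloring 3 V' cmp_adj K' g"
    using LeastI_ex[of "\<lambda>k. \<exists>f. relaxed_coloring 3 V' cmp_adj k f"] exV'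
    unfolding K'_def relaxed_chi_def by blast
  obtain f where f: "relaxed_coloring 3 V cmp_adj K f"
    using LeastI_ex[of "\<lambda>k. \<exists>f. relaxed_coloring 3 V cmp_adj k f"] exV
    unfolding K_def relaxed_chi_def by blast
  have grng: "\<And>u. u \<in> V' \<Longrightarrow> g u \<in> {1..K'}" using g unfolding relaxed_coloring_def by blast
  have gdeg: "\<And>u. u \<in> V' \<Longrightarrow> card {v\<in>V'. cmp_adj u v \<and> g v = g u} \<le> 3"
    using g unfolding relaxed_coloring_def by blast
  define f' where "f' v = (if v \<in> P then K' + 1 else g v)" for v
  have "relaxed_coloring 3 V cmp_adj (K' + 1) f'"
    unfolding relaxed_coloring_def
  proof (intro conjI ballI)
    fix u assume u: "u \<in> V"
    show "f' u \<in> {1..K' + 1}"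
      using grng[of u] u unfolding f'_def V'_def by auto
    show "card {v\<in>V. cmp_adj u v \<and> f' v = f' u} \<le> 3"
    proof (cases "u \<in> P")
      case True
      have e: "{v\<in>V. cmp_adj u v \<and> f' v = f' u} = {}"
      proof (rule ccontr)
        assume "{v\<in>V. cmp_adj u v \<and> f' v = f' u} \<noteq> {}"
        then obtain v where v: "v \<in> V" "cmp_adj u v" "f' v = f' u" by blast
        have "fst u = j" using inP u True by blast
        then have "v \<notin> P" using v inP unfolding cmp_adj_def by auto
        then have "v \<in> V'" using v unfolding V'_def by blast
        then show False using v(3) True grng[of v] \<open>v \<notin> P\<close> unfolding f'_def by auto
      qed
      show ?thesis unfolding e by simp
    next
      case False
      have "{v\<in>V. cmp_adj u v \<and> f' v = f' u} \<subseteq> {v\<in>V'. cmp_adj u v \<and> g v = g u}"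
      proof
        fix v assume v: "v \<in> {v\<in>V. cmp_adj u v \<and> f' v = f' u}"
        have uV': "u \<in> V'" using u False unfolding V'_def by blast
        have "v \<notin> P"
        proof
          assume "v \<in> P"
          then show False using v False grng[OF uV'] unfolding f'_def by auto
        qed
        then show "v \<in> {v\<in>V'. cmp_adj u v \<and> g v = g u}" using v False unfolding f'_def V'_def by auto
      qed
      then have "card {v\<in>V. cmp_adj u v \<and> f' v = f' u} \<le> card {v\<in>V'. cmp_adj u v \<and> g v = g u}"
        by (rule card_mono[rotated]) (use finV in \<open>auto simp: V'_def\<close>)
      then show ?thesis using gdeg[of u] u False unfolding V'_def by auto
    qed
  qed
  then have le1: "K \<le> K' + 1" unfolding K_def relaxed_chi_def by (blast intro: Least_le)
  obtain C h where Ch: "finite (C::nat set)" "card C \<le> K - 1" "\<forall>u\<in>V'. h u \<in> C"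
    "\<forall>u\<in>V'. card {v\<in>V'. cmp_adj u v \<and> h v = h u} \<le> 3"
    using lower[OF f[unfolded V_def] assms(3,4)] unfolding V'_def V_def P_def by blast
  obtain g' where "relaxed_coloring 3 V' cmp_adj (K - 1) g'"
    using compress[OF Ch] by blast
  then have "K' \<le> K - 1" unfolding K'_def relaxed_chi_def by (blast intro: Least_le)
  moreover have "K \<ge> 1"
  proof -
    have "(j, 0) \<in> V" using assms(3,4) unfolding V_def cmp_vertices_def by auto
    then have "f (j,0) \<in> {1..K}" using f unfolding relaxed_coloring_def by blast
    then show ?thesis by auto
  qed
  ultimately have "K = K' + 1" using le1 by linarith
  then show ?thesis unfolding K_def K'_def V'_def V_def P_def .
qed

end
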